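(* Let $s\ge1$, let $E_1,\ldots,E_s,F_1,\ldots,F_s$ be real numbers, and let $Z_j=\{F_j,\,E_j+F_j+1\}$ for $j=1,\ldots,s$. Suppose that for every $r=1,2,\ldots,s$, $$E_r+F_r+1+\max\big(Z_{r+1}+Z_{r+2}+\cdots+Z_s\big)<0.$$ Then the multiple series $$\sum_{k_1,\ldots,k_s\ge0}\ \prod_{j=1}^{s}(k_j+1)^{E_j}\,(k_1+\cdots+k_j+1)^{F_j}$$ converges.
   Context: For sets $S,T$ of reals, $S+T=\{x+y: x\in S,\ y\in T\}$ is the sum-set; for $r=s$ the sum-set $Z_{r+1}+\cdots+Z_s$ is empty of summands and is interpreted as $\{0\}$, so the condition reads $E_s+F_s+1<0$. *)

theory Defs
  imports "HOL-Analysis.Analysis"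
begin

definition sumset :: "real set \<Rightarrow> real set \<Rightarrow> real set" where
  "sumset S T = {x + y | x y. x \<in> S \<and> y \<in> T}"

text \<open>Iterated sum-set Z_(m+1) + ... + Z_s over the indices j with m < j <= s;
  the empty sum-set (m >= s) is {0}.\<close>
fun sumset_range :: "(nat \<Rightarrow> real set) \<Rightarrow> nat \<Rightarrow> nat \<Rightarrow> real set" where
  "sumset_range Z m 0 = {0}"
| "sumset_range Z m (Suc s) =
     (if m < Suc s then sumset (sumset_range Z m s) (Z (Suc s)) else {0})"

end

theory Submission
  imports Defs
begin

lemma pw:
  fixes E F G :: real
  assumes "F \<le> G" "E + F + 1 < G" "E + F + 1 < 0"
  shows "\<exists>p. p < -1 \<and> ( \<forall>x N. 0 \<le> x \<longrightarrow> 0 \<le> N \<longrightarrow>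
     (x+1) powr E * (N+x+1) powr F \<le> (x+1) powr p * (N+1) powr G)"
proof (cases "F \<ge> 0")
  case True
  show ?thesis
  proof (intro exI[of _ "E+F"] conjI allI impI)
    show "E + F < -1" using assms by simp
    fix x N :: real assume x: "0 \<le> x" and N: "0 \<le> N"
    have "(N+x+1) powr F \<le> ((N+1)*(x+1)) powr F"
      using True x N by (intro powr_mono2) (auto simp: algebra_simps)
    also have "\<dots> = (N+1) powr F * (x+1) powr F" using N x by (simp add: powr_mult)
    also have "\<dots> \<le> (N+1) powr G * (x+1) powr F"
      using N assms by (intro mult_right_mono powr_mono) auto
    finally have "(x+1) powr E * (N+x+1) powr F \<le> (x+1) powr E * ((N+1) powr G * (x+1) powr F)"
      by (intro mult_left_mono) auto
    also have "\<dots> = (x+1) powr (E+F) * (N+1) powr G" by (simp add: powr_add)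
    finally show "(x+1) powr E * (N+x+1) powr F \<le> (x+1) powr (E+F) * (N+1) powr G" .
  qed
next
  case Fneg: False
  show ?thesis
  proof (cases "E < -1")
    case True
    show ?thesis
    proof (intro exI[of _ "E"] conjI allI impI)
      show "E < -1" by fact
      fix x N :: real assume x: "0 \<le> x" and N: "0 \<le> N"
      have "(N+x+1) powr F \<le> (N+1) powr F"
        using Fneg x N by (intro powr_mono2') auto
      also have "\<dots> \<le> (N+1) powr G"
        using N assms by (intro powr_mono) auto
      finally show "(x+1) powr E * (N+x+1) powr F \<le> (x+1) powr E * (N+1) powr G"
        by (intro mult_left_mono) auto
    qed
  next
    case False
    define d where "d = min (G - (E+F+1)) (-(E+F+1))"
    have d: "d > 0" "E+F+1+d \<le> 0" "E+F+1+d \<le> G" using assms unfolding d_def by auto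
    show ?thesis
    proof (intro exI[of _ "-1-d"] conjI allI impI)
      show "-1-d < -1" using d by simp
      fix x N :: real assume x: "0 \<le> x" and N: "0 \<le> N"
      have "(x+1) powr E = (x+1) powr (-1-d) * (x+1) powr (E+1+d)"
        by (simp add: powr_add[symmetric])
      also have "\<dots> \<le> (x+1) powr (-1-d) * (N+x+1) powr (E+1+d)"
        using False d x N by (intro mult_left_mono powr_mono2) auto
      finally have "(x+1) powr E * (N+x+1) powr F \<le> (x+1) powr (-1-d) * (N+x+1) powr (E+1+d) * (N+x+1) powr F"
        by (intro mult_right_mono) auto
      also have "\<dots> = (x+1) powr (-1-d) * (N+x+1) powr (E+F+1+d)"
        by (simp add: powr_add[symmetric] mult.assoc add_ac)
      also have "\<dots> \<le> (x+1) powr (-1-d) * (N+1) powr (E+F+1+d)"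
        using d x N by (intro mult_left_mono powr_mono2') auto
      also have "\<dots> \<le> (x+1) powr (-1-d) * (N+1) powr G"
        using d x N by (intro mult_left_mono powr_mono) auto
      finally show "(x+1) powr E * (N+x+1) powr F \<le> (x+1) powr (-1-d) * (N+1) powr G" .
    qed
  qed
qed

lemma max_sumset:
  fixes S T :: "real set"
  assumes "finite S" "finite T" "S \<noteq> {}" "T \<noteq> {}"
  shows "finite (sumset S T) \<and> sumset S T \<noteq> {} \<and> Max (sumset S T) = Max S + Max T"
proof -
  have eq: "sumset S T = (\<lambda>(x,y). x+y) ` (S \<times> T)" unfolding sumset_def by auto
  have f: "finite (sumset S T)" using assms eq by simp
  have ne: "sumset S T \<noteq> {}" using assms eq by auto
  have "Max (sumset S T) = Max S + Max T"
  proof (rule Max_eqI[OF f])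
    fix z assume "z \<in> sumset S T"
    then obtain x y where "z = x + y" "x \<in> S" "y \<in> T" unfolding sumset_def by auto
    then show "z \<le> Max S + Max T" using assms by (simp add: add_mono)
  next
    have "Max S \<in> S" "Max T \<in> T" using assms by auto
    then show "Max S + Max T \<in> sumset S T" unfolding sumset_def by blast
  qed
  then show ?thesis using f ne by blast
qed

lemma max_sumset_range:
  assumes "\<And>j. finite (Z j) \<and> Z j \<noteq> {}"
  shows "finite (sumset_range Z r s) \<and> sumset_range Z r s \<noteq> {} \<and>
         Max (sumset_range Z r s) = (\<Sum>j\<in>{r<..s}. Max (Z j))"
proof (induction s)
  case 0
  then show ?case by simp
next
  case (Suc s)
  show ?case
  proof (cases "r < Suc s")
    case True
    have I: "{r<..Suc s} = insert (Suc s) {r<..s}" using True by auto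
    show ?thesis using max_sumset[of "sumset_range Z r s" "Z (Suc s)"] Suc assms[of "Suc s"] True
      by (simp add: I add.commute)
  next
    case False
    then show ?thesis by simp
  qed
qed

lemma slack:
  fixes a :: "nat \<Rightarrow> real"
  assumes "finite S" "\<forall>r\<in>S. a r < 0"
  shows "\<exists>e>0. \<forall>r\<in>S. a r + e < 0"
  using assms
proof (induction S rule: finite_induct)
  case empty
  then show ?case by (intro exI[of _ 1]) auto
next
  case (insert x S)
  then obtain e where e: "e > 0" "\<forall>r\<in>S. a r + e < 0" by auto
  show ?case using insert e by (intro exI[of _ "min e (- a x / 2)"]) force
qed

lemma main:
  fixes E :: "nat \<Rightarrow> real"
  shows "\<forall>F. (\<forall>r\<in>{1..n}. E r + F r + 1 + (\<Sum>j\<in>{r<..n}. max (F j) (E j + F j + 1)) < 0) \<longrightarrow>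
    (\<exists>p. (\<forall>j\<in>{1..n}. p j < -1) \<and> (\<forall>k::nat\<Rightarrow>nat.
       (\<Prod>j\<in>{1..n}. (real (k j) + 1) powr E j * (real (\<Sum>i\<in>{1..j}. k i) + 1) powr F j)
        \<le> (\<Prod>j\<in>{1..n}. (real (k j) + 1) powr p j)))"
proof (induction n)
  case 0
  then show ?case by simp
next
  case (Suc n)
  show ?case
  proof (intro allI impI)
    fix F :: "nat \<Rightarrow> real"
    define M where "M j = max (F j) (E j + F j + 1)" for j
    assume cond: "\<forall>r\<in>{1..Suc n}. E r + F r + 1 + (\<Sum>j\<in>{r<..Suc n}. max (F j) (E j + F j + 1)) < 0"
    then have cond': "\<forall>r\<in>{1..Suc n}. E r + F r + 1 + (\<Sum>j\<in>{r<..Suc n}. M j) < 0"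
      unfolding M_def by simp
    obtain e where e: "e > 0" "\<forall>r\<in>{1..Suc n}. E r + F r + 1 + (\<Sum>j\<in>{r<..Suc n}. M j) + e < 0"
      using slack[OF _ cond'] by auto
    define G where "G = M (Suc n) + e"
    have last: "E (Suc n) + F (Suc n) + 1 < 0" using cond'[rule_format, of "Suc n"] by simp
    obtain p0 where p0: "p0 < -1" "\<forall>x N. 0 \<le> x \<longrightarrow> 0 \<le> N \<longrightarrow>
       (x+1) powr E (Suc n) * (N+x+1) powr F (Suc n) \<le> (x+1) powr p0 * (N+1) powr G"
      proof -
      have "F (Suc n) \<le> G" "E (Suc n) + F (Suc n) + 1 < G" using e(1) unfolding G_def M_def by auto
      from pw[OF this last] show ?thesis using that by blast
    qed
    define F' where "F' = F(n := F n + G)"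
    have M': "max (F' j) (E j + F' j + 1) = M j + (if j = n then G else 0)" for j
      unfolding F'_def M_def by auto
    have cond2: "\<forall>r\<in>{1..n}. E r + F' r + 1 + (\<Sum>j\<in>{r<..n}. max (F' j) (E j + F' j + 1)) < 0"
    proof
      fix r assume r: "r \<in> {1..n}"
      have s1: "(\<Sum>j\<in>{r<..Suc n}. M j) = (\<Sum>j\<in>{r<..n}. M j) + M (Suc n)"
      proof -
        have "{r<..Suc n} = insert (Suc n) {r<..n}" using r by auto
        then show ?thesis by (simp add: add.commute)
      qed
      have "E r + F' r + 1 + (\<Sum>j\<in>{r<..n}. max (F' j) (E j + F' j + 1))
          = E r + F r + 1 + (\<Sum>j\<in>{r<..n}. M j) + G"
      proof (cases "r = n")
        case True
        then show ?thesis unfolding F'_def by simp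
      next
        case False
        then have "r < n" using r by auto
        have "(\<Sum>j\<in>{r<..n}. max (F' j) (E j + F' j + 1)) = (\<Sum>j\<in>{r<..n}. M j + (if j = n then G else 0))"
          by (simp only: M')
        also have "\<dots> = (\<Sum>j\<in>{r<..n}. M j) + G"
          using \<open>r < n\<close> by (simp add: sum.distrib sum.delta)
        finally show ?thesis using False unfolding F'_def by simp
      qed
      also have "\<dots> < 0" using e(2) r s1 unfolding G_def by force
      finally show "E r + F' r + 1 + (\<Sum>j\<in>{r<..n}. max (F' j) (E j + F' j + 1)) < 0" .
    qed
    obtain p' where p': "\<forall>j\<in>{1..n}. p' j < -1" "\<forall>k::nat\<Rightarrow>nat.
       (\<Prod>j\<in>{1..n}. (real (k j) + 1) powr E j * (real (\<Sum>i\<in>{1..j}. k i) + 1) powr F' j)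
        \<le> (\<Prod>j\<in>{1..n}. (real (k j) + 1) powr p' j)"
      using Suc.IH cond2 by blast
    define p where "p = p'(Suc n := p0)"
    show "\<exists>p. (\<forall>j\<in>{1..Suc n}. p j < -1) \<and> (\<forall>k::nat\<Rightarrow>nat.
       (\<Prod>j\<in>{1..Suc n}. (real (k j) + 1) powr E j * (real (\<Sum>i\<in>{1..j}. k i) + 1) powr F j)
        \<le> (\<Prod>j\<in>{1..Suc n}. (real (k j) + 1) powr p j))"
    proof (intro exI[of _ p] conjI allI ballI)
      fix j assume "j \<in> {1..Suc n}"
      then show "p j < -1" using p' p0 unfolding p_def by (cases "j = Suc n") auto
    next
      fix k :: "nat \<Rightarrow> nat"
      define T where "T H j = (real (k j) + 1) powr E j * (real (\<Sum>i\<in>{1..j}. k i) + 1) powr H j" for H j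
      define K where "K = real (\<Sum>i\<in>{1..n}. k i)"
      have K0: "K \<ge> 0" unfolding K_def by (simp only: of_nat_0_le_iff)
      have Tnn: "T H j \<ge> 0" for H j unfolding T_def by simp
      have Tlast: "T F (Suc n) \<le> (real (k (Suc n)) + 1) powr p0 * (K + 1) powr G"
      proof -
        have "real (\<Sum>i\<in>{1..Suc n}. k i) = K + real (k (Suc n))"
          unfolding K_def by (simp add: sum.cl_ivl_Suc)
        then show ?thesis unfolding T_def using p0(2) K0
          by (metis add.assoc add.commute of_nat_0_le_iff)
      qed
      have TF': "(\<Prod>j\<in>{1..n}. T F' j) = (\<Prod>j\<in>{1..n}. T F j) * (K + 1) powr G"
      proof (cases "n = 0")
        case True
        then show ?thesis unfolding K_def by simp
      next
        case False
        have "(\<Prod>j\<in>{1..n}. T F' j) = (\<Prod>j\<in>{1..n}. T F j * (if j = n then (K+1) powr G else 1))"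
          by (intro prod.cong) (auto simp: T_def F'_def K_def powr_add)
        also have "\<dots> = (\<Prod>j\<in>{1..n}. T F j) * (K + 1) powr G"
          using False by (simp add: prod.distrib prod.delta)
        finally show ?thesis .
      qed
      have "(\<Prod>j\<in>{1..Suc n}. T F j) = (\<Prod>j\<in>{1..n}. T F j) * T F (Suc n)"
        by (simp add: prod.cl_ivl_Suc)
      also have "\<dots> \<le> (\<Prod>j\<in>{1..n}. T F j) * ((real (k (Suc n)) + 1) powr p0 * (K + 1) powr G)"
        by (intro mult_left_mono Tlast prod_nonneg) (auto simp: Tnn)
      also have "\<dots> = (\<Prod>j\<in>{1..n}. T F' j) * (real (k (Suc n)) + 1) powr p0"
        unfolding TF' by (simp add: ac_simps)
      also have "\<dots> \<le> (\<Prod>j\<in>{1..n}. (real (k j) + 1) powr p' j) * (real (k (Suc n)) + 1) powr p0"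
        using p'(2) unfolding T_def by (intro mult_right_mono) auto
      also have "\<dots> = (\<Prod>j\<in>{1..Suc n}. (real (k j) + 1) powr p j)"
        unfolding p_def by (simp add: prod.cl_ivl_Suc)
      finally show "(\<Prod>j\<in>{1..Suc n}. (real (k j) + 1) powr E j * (real (\<Sum>i\<in>{1..j}. k i) + 1) powr F j)
        \<le> (\<Prod>j\<in>{1..Suc n}. (real (k j) + 1) powr p j)" unfolding T_def .
    qed
  qed
qed

lemma pseries: "p < -1 \<Longrightarrow> Infinite_Set_Sum.abs_summable_on (\<lambda>n::nat. (real n + 1) powr p) UNIV"
proof -
  assume p: "p < -1"
  have "summable (\<lambda>n::nat. real n powr p)" using p by (simp add: summable_real_powr_iff)
  then have "summable (\<lambda>n::nat. real (Suc n) powr p)" by (subst summable_Suc_iff)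
  then have "summable (\<lambda>n::nat. norm ((real n + 1) powr p))" by (simp add: add.commute)
  then have "(\<lambda>n::nat. norm ((real n + 1) powr p)) summable_on UNIV"
    by (subst summable_on_UNIV_nonneg_real_iff) auto
  then show ?thesis by (rule abs_summable_equivalent[THEN iffD1])
qed

theorem lemma3p4:
  fixes s :: nat and E F :: "nat \<Rightarrow> real"
  assumes "s \<ge> 1"
  assumes "\<And>r. 1 \<le> r \<Longrightarrow> r \<le> s \<Longrightarrow>
      E r + F r + 1 + Max (sumset_range (\<lambda>j. {F j, E j + F j + 1}) r s) < 0"
  shows "(\<lambda>k. \<Prod>j\<in>{1..s}. (real (k j) + 1) powr E j * (real (\<Sum>i\<in>{1..j}. k i) + 1) powr F j)
           summable_on (PiE {1..s} (\<lambda>_. UNIV))"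
proof -
  have mx: "Max (sumset_range (\<lambda>j. {F j, E j + F j + 1}) r s) = (\<Sum>j\<in>{r<..s}. max (F j) (E j + F j + 1))" for r
    using max_sumset_range[of "\<lambda>j. {F j, E j + F j + 1}" r s] by simp
  have cond: "\<forall>r\<in>{1..s}. E r + F r + 1 + (\<Sum>j\<in>{r<..s}. max (F j) (E j + F j + 1)) < 0"
    using assms(2) mx by auto
  obtain p where p: "\<forall>j\<in>{1..s}. p j < -1" "\<forall>k::nat\<Rightarrow>nat.
       (\<Prod>j\<in>{1..s}. (real (k j) + 1) powr E j * (real (\<Sum>i\<in>{1..j}. k i) + 1) powr F j)
        \<le> (\<Prod>j\<in>{1..s}. (real (k j) + 1) powr p j)"
    using main[where n=s and E=E] cond by blast
  have "Infinite_Set_Sum.abs_summable_on (\<lambda>k. \<Prod>j\<in>{1..s}. (real (k j) + 1) powr p j) (PiE {1..s} (\<lambda>_. UNIV))"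
    by (rule Infinite_Set_Sum.abs_summable_on_prod_PiE) (auto intro: pseries simp: p)
  then have sm: "(\<lambda>k. norm (\<Prod>j\<in>{1..s}. (real (k j) + 1) powr p j)) summable_on (PiE {1..s} (\<lambda>_. UNIV))"
    by (rule abs_summable_equivalent[THEN iffD2])
  show ?thesis
  proof (rule summable_on_comparison_test[OF sm])
    fix k :: "nat \<Rightarrow> nat"
    show "0 \<le> (\<Prod>j\<in>{1..s}. (real (k j) + 1) powr E j * (real (\<Sum>i\<in>{1..j}. k i) + 1) powr F j)"
      by (intro prod_nonneg) auto
    show "(\<Prod>j\<in>{1..s}. (real (k j) + 1) powr E j * (real (\<Sum>i\<in>{1..j}. k i) + 1) powr F j)
       \<le> norm (\<Prod>j\<in>{1..s}. (real (k j) + 1) powr p j)"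
      unfolding real_norm_def by (rule order_trans[OF p(2)[rule_format] abs_ge_self])
  qed
qed

end
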